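(* Let $p$ be a prime number and let $1\to\Gamma'\to\Gamma\to\Gamma''$ be an exact sequence of groups. Suppose that $\Gamma''$ has bounded finite subgroups, and that $\Gamma'$ is Jordan (respectively $p$-Jordan, generalized $p$-Jordan, nilpotently Jordan of class at most $c$, nilpotently $p$-Jordan of class at most $c$, generalized nilpotently $p$-Jordan of class at most $c$). Then $\Gamma$ is Jordan (respectively $p$-Jordan, generalized $p$-Jordan, nilpotently Jordan of class at most $c$, nilpotently $p$-Jordan of class at most $c$, generalized nilpotently $p$-Jordan of class at most $c$).
   Context: A group has bounded finite subgroups if there is a constant $B$ such that every finite subgroup has order at most $B$. A group $\Gamma$ is Jordan (resp. nilpotently Jordan of class at most $c$) if there is $J(\Gamma)$ such that every finite subgroup contains a normal subgroup of index at most $J(\Gamma)$ which is abelian (resp. nilpotent of class at most $c$). It is generalized $p$-Jordan (resp. generalized nilpotently $p$-Jordan of class at most $c$) if there is $J(\Gamma)$ such that every finite subgroup of order not divisible by $p$ contains a normal subgroup of index at most $J(\Gamma)$ which is abelian (resp. nilpotent of class at most $c$). It is $p$-Jordan (resp. nilpotently $p$-Jordan of class at most $c$) if there are $J(\Gamma)$, $e(\Gamma)$ such that every finite subgroup $G$ contains a normal subgroup of order coprime to $p$ and index at most $J(\Gamma)|G_p|^{e(\Gamma)}$ which is abelian (resp. nilpotent of class at most $c$), $G_p$ being a $p$-Sylow subgroup of $G$. *)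

theory Defs
  imports "HOL-Algebra.Algebra" "HOL-Computational_Algebra.Primes"
begin

definition finite_subgroup :: "('a, 'b) monoid_scheme \<Rightarrow> 'a set \<Rightarrow> bool" where
  "finite_subgroup \<Gamma> G \<longleftrightarrow> subgroup G \<Gamma> \<and> finite G"

definition bounded_finite_subgroups :: "('a, 'b) monoid_scheme \<Rightarrow> bool" where
  "bounded_finite_subgroups \<Gamma> \<longleftrightarrow>
     (\<exists>B::nat. \<forall>G. finite_subgroup \<Gamma> G \<longrightarrow> card G \<le> B)"

definition abelian_set :: "('a, 'b) monoid_scheme \<Rightarrow> 'a set \<Rightarrow> bool" where
  "abelian_set \<Gamma> A \<longleftrightarrow> (\<forall>x\<in>A. \<forall>y\<in>A. x \<otimes>\<^bsub>\<Gamma>\<^esub> y = y \<otimes>\<^bsub>\<Gamma>\<^esub> x)"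

text \<open>Lower central series of the subgroup A: lcs 0 = A = gamma_1, lcs (k+1) = [lcs k, A].\<close>
fun lower_central :: "('a, 'b) monoid_scheme \<Rightarrow> 'a set \<Rightarrow> nat \<Rightarrow> 'a set" where
  "lower_central \<Gamma> A 0 = A"
| "lower_central \<Gamma> A (Suc k) = generate \<Gamma>
     {x \<otimes>\<^bsub>\<Gamma>\<^esub> y \<otimes>\<^bsub>\<Gamma>\<^esub> inv\<^bsub>\<Gamma>\<^esub> x \<otimes>\<^bsub>\<Gamma>\<^esub> inv\<^bsub>\<Gamma>\<^esub> y | x y. x \<in> lower_central \<Gamma> A k \<and> y \<in> A}"

definition nilpotent_class_le :: "('a, 'b) monoid_scheme \<Rightarrow> nat \<Rightarrow> 'a set \<Rightarrow> bool" where
  "nilpotent_class_le \<Gamma> c A \<longleftrightarrow> lower_central \<Gamma> A c = {\<one>\<^bsub>\<Gamma>\<^esub>}"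

definition jordan_wrt :: "('a, 'b) monoid_scheme \<Rightarrow> ('a set \<Rightarrow> bool) \<Rightarrow> bool" where
  "jordan_wrt \<Gamma> P \<longleftrightarrow> (\<exists>J::nat. \<forall>G. finite_subgroup \<Gamma> G \<longrightarrow>
     (\<exists>A. A \<lhd> (\<Gamma>\<lparr>carrier := G\<rparr>) \<and> card G \<le> J * card A \<and> P A))"

definition gen_p_jordan_wrt :: "('a, 'b) monoid_scheme \<Rightarrow> nat \<Rightarrow> ('a set \<Rightarrow> bool) \<Rightarrow> bool" where
  "gen_p_jordan_wrt \<Gamma> p P \<longleftrightarrow> (\<exists>J::nat. \<forall>G. finite_subgroup \<Gamma> G \<and> \<not> p dvd card G \<longrightarrow>
     (\<exists>A. A \<lhd> (\<Gamma>\<lparr>carrier := G\<rparr>) \<and> card G \<le> J * card A \<and> P A))"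

text \<open>The order of a p-Sylow subgroup of G is p ^ multiplicity p (card G).\<close>
definition p_jordan_wrt :: "('a, 'b) monoid_scheme \<Rightarrow> nat \<Rightarrow> ('a set \<Rightarrow> bool) \<Rightarrow> bool" where
  "p_jordan_wrt \<Gamma> p P \<longleftrightarrow> (\<exists>J e::nat. \<forall>G. finite_subgroup \<Gamma> G \<longrightarrow>
     (\<exists>A. A \<lhd> (\<Gamma>\<lparr>carrier := G\<rparr>) \<and> coprime (card A) p \<and>
          card G \<le> J * (p ^ multiplicity p (card G)) ^ e * card A \<and> P A))"

definition Jordan where "Jordan \<Gamma> = jordan_wrt \<Gamma> (abelian_set \<Gamma>)"
definition p_Jordan where "p_Jordan \<Gamma> p = p_jordan_wrt \<Gamma> p (abelian_set \<Gamma>)"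
definition gen_p_Jordan where "gen_p_Jordan \<Gamma> p = gen_p_jordan_wrt \<Gamma> p (abelian_set \<Gamma>)"
definition nil_Jordan where "nil_Jordan \<Gamma> c = jordan_wrt \<Gamma> (nilpotent_class_le \<Gamma> c)"
definition nil_p_Jordan where "nil_p_Jordan \<Gamma> p c = p_jordan_wrt \<Gamma> p (nilpotent_class_le \<Gamma> c)"
definition gen_nil_p_Jordan where "gen_nil_p_Jordan \<Gamma> p c = gen_p_jordan_wrt \<Gamma> p (nilpotent_class_le \<Gamma> c)"

end

theory Submission
  imports Defs
begin
lemma card_fibers_le:
  assumes "finite A" "\<And>z. z \<in> g ` A \<Longrightarrow> card {a\<in>A. g a = z} \<le> m"
  shows "card A \<le> card (g ` A) * m"
proof -
  have "A = (\<Union>z\<in>g ` A. {a\<in>A. g a = z})" by auto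
  hence "card A \<le> (\<Sum>z\<in>g ` A. card {a\<in>A. g a = z})"
    by (metis card_UN_le assms(1) finite_imageI)
  also have "\<dots> \<le> (\<Sum>z\<in>g ` A. m)" by (intro sum_mono assms(2))
  finally show ?thesis by simp
qed

lemma (in group) product_card:
  assumes "subgroup K G" "finite K" "subgroup U G" "subgroup V G" "U \<subseteq> K" "V \<subseteq> K"
  shows "card U * card V \<le> card K * card (U \<inter> V)"
proof -
  let ?g = "\<lambda>(x,y). x \<otimes> y"
  have fU: "finite U" using assms(2,5) by (rule finite_subset[rotated])
  have fV: "finite V" using assms(2,6) by (rule finite_subset[rotated])
  have fin: "finite (U \<times> V)" using fU fV by simp
  have c1: "card (U \<times> V) \<le> card (?g ` (U \<times> V)) * card (U \<inter> V)"
  proof (rule card_fibers_le[OF fin])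
    fix z assume "z \<in> ?g ` (U \<times> V)"
    then obtain x0 y0 where z: "x0 \<in> U" "y0 \<in> V" "z = x0 \<otimes> y0" by auto
    have cx: "\<And>x. x \<in> U \<Longrightarrow> x \<in> carrier G" by (rule subgroup.mem_carrier[OF assms(3)])
    have cy: "\<And>x. x \<in> V \<Longrightarrow> x \<in> carrier G" by (rule subgroup.mem_carrier[OF assms(4)])
    show "card {a \<in> U \<times> V. ?g a = z} \<le> card (U \<inter> V)"
    proof (rule card_inj_on_le[where f = "\<lambda>(x,y). inv x0 \<otimes> x"])
      show "inj_on (\<lambda>(x,y). inv x0 \<otimes> x) {a \<in> U \<times> V. ?g a = z}"
      proof (rule inj_onI)
        fix a b assume a: "a \<in> {a \<in> U \<times> V. ?g a = z}" and b: "b \<in> {a \<in> U \<times> V. ?g a = z}"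
          and e: "(\<lambda>(x,y). inv x0 \<otimes> x) a = (\<lambda>(x,y). inv x0 \<otimes> x) b"
        obtain x y where xy: "a = (x,y)" by fastforce
        obtain x' y' where xy': "b = (x',y')" by fastforce
        have h: "x \<in> U" "y \<in> V" "x \<otimes> y = z" "x' \<in> U" "y' \<in> V" "x' \<otimes> y' = z"
          "inv x0 \<otimes> x = inv x0 \<otimes> x'" using a b e xy xy' by auto
        have "x = x'" using h cx cy z l_cancel[of "inv x0" x x'] by simp
        moreover have "y = y'" using h cx cy z calculation l_cancel[of x y y'] by simp
        ultimately show "a = b" using xy xy' by simp
      qed
      show "(\<lambda>(x,y). inv x0 \<otimes> x) ` {a \<in> U \<times> V. ?g a = z} \<subseteq> U \<inter> V"
      proof
        fix w assume "w \<in> (\<lambda>(x,y). inv x0 \<otimes> x) ` {a \<in> U \<times> V. ?g a = z}"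
        then obtain x y where h: "x \<in> U" "y \<in> V" "x \<otimes> y = z" and w: "w = inv x0 \<otimes> x" by auto
        have "inv x0 \<otimes> x \<in> U" using h z assms(3) by (meson subgroup.m_closed subgroup.m_inv_closed)
        moreover have "inv x0 \<otimes> x = y0 \<otimes> inv y"
        proof -
          have "inv x0 \<otimes> x \<otimes> y = inv x0 \<otimes> (x0 \<otimes> y0)" using h z cx cy by (simp add: m_assoc)
          also have "\<dots> = y0" using z cx cy by (simp add: m_assoc[symmetric])
          finally have "inv x0 \<otimes> x \<otimes> y = y0" .
          thus ?thesis using h z cx cy inv_solve_right[of "inv x0 \<otimes> x" y0 y] by simp
        qed
        moreover have "y0 \<otimes> inv y \<in> V" using h z assms(4) by (meson subgroup.m_closed subgroup.m_inv_closed)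
        ultimately show "w \<in> U \<inter> V" using w by simp
      qed
      show "finite (U \<inter> V)" using fU by simp
    qed
  qed
  have c2: "card (?g ` (U \<times> V)) \<le> card K"
  proof (rule card_mono[OF assms(2)])
    show "?g ` (U \<times> V) \<subseteq> K"
    proof clarify
      fix x y assume "x \<in> U" "y \<in> V"
      then have "x \<in> K" "y \<in> K" using assms(5,6) by auto
      then show "x \<otimes> y \<in> K" by (rule subgroup.m_closed[OF assms(1)])
    qed
  qed
  have "card (U \<times> V) \<le> card K * card (U \<inter> V)" using c1 c2 mult_le_mono1 le_trans by blast
  then show ?thesis by (simp add: card_cartesian_product)
qed


context group begin
lemma cancel1: "x \<in> carrier G \<Longrightarrow> y \<in> carrier G \<Longrightarrow> x \<otimes> (inv x \<otimes> y) = y"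
  by (simp add: m_assoc[symmetric])
lemma cancel2: "x \<in> carrier G \<Longrightarrow> y \<in> carrier G \<Longrightarrow> inv x \<otimes> (x \<otimes> y) = y"
  by (simp add: m_assoc[symmetric])
lemma conjL1: "a \<in> carrier G \<Longrightarrow> b \<in> carrier G \<Longrightarrow> h \<in> carrier G \<Longrightarrow>
  inv h \<otimes> (a \<otimes> b) \<otimes> h = (inv h \<otimes> a \<otimes> h) \<otimes> (inv h \<otimes> b \<otimes> h)"
  by (simp add: m_assoc cancel1)
lemma conjL2: "a \<in> carrier G \<Longrightarrow> h \<in> carrier G \<Longrightarrow>
  inv h \<otimes> inv a \<otimes> h = inv (inv h \<otimes> a \<otimes> h)"
  by (simp add: m_assoc inv_mult_group)
lemma conjL3: "a \<in> carrier G \<Longrightarrow> h \<in> carrier G \<Longrightarrow>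
  inv h \<otimes> (h \<otimes> a \<otimes> inv h) \<otimes> h = a"
  by (simp add: m_assoc cancel1 cancel2)
lemma conjL4: "x \<in> carrier G \<Longrightarrow> g \<in> carrier G \<Longrightarrow> k \<in> carrier G \<Longrightarrow>
  inv (g \<otimes> k) \<otimes> x \<otimes> (g \<otimes> k) = inv k \<otimes> (inv g \<otimes> x \<otimes> g) \<otimes> k"
  by (simp add: m_assoc inv_mult_group)

lemma inter_index:
  assumes "subgroup K G" "finite K" "finite S"
    "\<And>U. U \<in> S \<Longrightarrow> subgroup U G \<and> U \<subseteq> K \<and> card K \<le> N * card U"
  shows "card K \<le> N ^ card S * card (K \<inter> \<Inter>S)"
  using assms(3,4)
proof (induction S rule: finite_induct)
  case empty then show ?case by simp
next
  case (insert U S)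
  let ?Z = "K \<inter> \<Inter>S"
  have IH: "card K \<le> N ^ card S * card ?Z" using insert by blast
  have U: "subgroup U G" "U \<subseteq> K" "card K \<le> N * card U" using insert.prems by blast+
  have "subgroup (\<Inter>(insert K S)) G"
    by (rule subgroups_Inter) (use insert.prems assms(1) in blast)+
  hence Zs: "subgroup ?Z G" by simp
  have eq: "K \<inter> \<Inter>(insert U S) = U \<inter> ?Z" using U(2) by blast
  have pc: "card U * card ?Z \<le> card K * card (U \<inter> ?Z)"
    by (rule product_card[OF assms(1,2) U(1) Zs U(2)]) blast
  have "card K * card K \<le> (N * card U) * (N ^ card S * card ?Z)"
    using U(3) IH by (rule mult_le_mono)
  also have "\<dots> = (N * N ^ card S) * (card U * card ?Z)" by (simp add: ac_simps)
  also have "\<dots> \<le> (N * N ^ card S) * (card K * card (U \<inter> ?Z))"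
    using pc by (rule mult_le_mono2)
  finally have "card K * card K \<le> card K * ((N * N ^ card S) * card (U \<inter> ?Z))"
    by (simp add: ac_simps)
  moreover have "card K > 0"
    using assms(2) subgroup.one_closed[OF assms(1)] card_gt_0_iff by blast
  ultimately have "card K \<le> (N * N ^ card S) * card (U \<inter> ?Z)"
    by simp
  then show ?case using insert.hyps eq by simp
qed


lemma core:
  assumes H: "subgroup H G" "finite H"
    and K: "subgroup K G" "K \<subseteq> H" "\<And>h k. h \<in> H \<Longrightarrow> k \<in> K \<Longrightarrow> h \<otimes> k \<otimes> inv h \<in> K"
    and A: "subgroup A G" "A \<subseteq> K" "\<And>k a. k \<in> K \<Longrightarrow> a \<in> A \<Longrightarrow> inv k \<otimes> a \<otimes> k \<in> A"
    and idx: "card K \<le> N * card A"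
    and q: "\<And>h h'. h \<in> H \<Longrightarrow> h' \<in> H \<Longrightarrow> q h = q h' \<longleftrightarrow> inv h \<otimes> h' \<in> K"
    and qB: "card (q ` H) \<le> B"
  shows "\<exists>C. C \<lhd> G\<lparr>carrier := H\<rparr> \<and> subgroup C G \<and> C \<subseteq> A \<and> card H \<le> B * N ^ B * card C"
proof -
  have cH: "\<And>x. x \<in> H \<Longrightarrow> x \<in> carrier G" by (rule subgroup.mem_carrier[OF H(1)])
  have cK: "\<And>x. x \<in> K \<Longrightarrow> x \<in> carrier G" by (rule subgroup.mem_carrier[OF K(1)])
  have cA: "\<And>x. x \<in> A \<Longrightarrow> x \<in> carrier G" by (rule subgroup.mem_carrier[OF A(1)])
  have fK: "finite K" using H(2) K(2) by (rule finite_subset[rotated])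
  have fA: "finite A" using fK A(2) by (rule finite_subset[rotated])
  define Cj where "Cj h = {x \<in> K. inv h \<otimes> x \<otimes> h \<in> A}" for h
  define C where "C = K \<inter> \<Inter>(Cj ` H)"
  have Cj_sub: "subgroup (Cj h) G" if h: "h \<in> H" for h
  proof (rule subgroupI)
    show "Cj h \<subseteq> carrier G" unfolding Cj_def using cK by blast
    have "inv h \<otimes> \<one> \<otimes> h = \<one>" using cH[OF h] by simp
    hence "\<one> \<in> Cj h" unfolding Cj_def using subgroup.one_closed[OF K(1)] subgroup.one_closed[OF A(1)] by simp
    thus "Cj h \<noteq> {}" by blast
  next
    fix a assume a: "a \<in> Cj h"
    hence a1: "a \<in> K" "inv h \<otimes> a \<otimes> h \<in> A" unfolding Cj_def by auto
    have "inv h \<otimes> inv a \<otimes> h = inv (inv h \<otimes> a \<otimes> h)" using conjL2 cK[OF a1(1)] cH[OF h] by blast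
    hence "inv h \<otimes> inv a \<otimes> h \<in> A" using a1(2) subgroup.m_inv_closed[OF A(1)] by simp
    moreover have "inv a \<in> K" using a1(1) subgroup.m_inv_closed[OF K(1)] by blast
    ultimately show "inv a \<in> Cj h" unfolding Cj_def by simp
  next
    fix a b assume a: "a \<in> Cj h" and b: "b \<in> Cj h"
    hence ab: "a \<in> K" "inv h \<otimes> a \<otimes> h \<in> A" "b \<in> K" "inv h \<otimes> b \<otimes> h \<in> A" unfolding Cj_def by auto
    have "inv h \<otimes> (a \<otimes> b) \<otimes> h = (inv h \<otimes> a \<otimes> h) \<otimes> (inv h \<otimes> b \<otimes> h)"
      using conjL1 cK[OF ab(1)] cK[OF ab(3)] cH[OF h] by blast
    hence "inv h \<otimes> (a \<otimes> b) \<otimes> h \<in> A" using ab(2,4) subgroup.m_closed[OF A(1)] by simp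
    moreover have "a \<otimes> b \<in> K" using ab(1,3) subgroup.m_closed[OF K(1)] by blast
    ultimately show "a \<otimes> b \<in> Cj h" unfolding Cj_def by simp
  qed
  have Cj_card: "card K \<le> N * card (Cj h)" if h: "h \<in> H" for h
  proof -
    have "card A \<le> card (Cj h)"
    proof (rule card_inj_on_le[where f = "\<lambda>a. h \<otimes> a \<otimes> inv h"])
      show "inj_on (\<lambda>a. h \<otimes> a \<otimes> inv h) A"
      proof (rule inj_onI)
        fix a b assume "a \<in> A" "b \<in> A" "h \<otimes> a \<otimes> inv h = h \<otimes> b \<otimes> inv h"
        then show "a = b" using conjL3[of a h] conjL3[of b h] cA cH[OF h] by metis
      qed
      show "(\<lambda>a. h \<otimes> a \<otimes> inv h) ` A \<subseteq> Cj h"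
      proof
        fix x assume "x \<in> (\<lambda>a. h \<otimes> a \<otimes> inv h) ` A"
        then obtain a where a: "a \<in> A" "x = h \<otimes> a \<otimes> inv h" by blast
        have "x \<in> K" using K(3)[OF h] a A(2) by blast
        moreover have "inv h \<otimes> x \<otimes> h \<in> A" using a conjL3[of a h] cA cH[OF h] by simp
        ultimately show "x \<in> Cj h" unfolding Cj_def by simp
      qed
      show "finite (Cj h)" using fK unfolding Cj_def by simp
    qed
    then show ?thesis using idx by (meson le_trans mult_le_mono2)
  qed
  have Cj_q: "Cj h \<subseteq> Cj h'" if h: "h \<in> H" "h' \<in> H" "q h = q h'" for h h'
  proof
    fix x assume "x \<in> Cj h"
    hence x: "x \<in> K" "inv h \<otimes> x \<otimes> h \<in> A" unfolding Cj_def by auto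
    define k where "k = inv h \<otimes> h'"
    have k: "k \<in> K" using q[OF h(1,2)] h(3) k_def by simp
    have hk: "h' = h \<otimes> k" unfolding k_def using cH h by (simp add: cancel1)
    have "inv h' \<otimes> x \<otimes> h' = inv k \<otimes> (inv h \<otimes> x \<otimes> h) \<otimes> k"
      unfolding hk using conjL4 cK[OF x(1)] cH[OF h(1)] cK[OF k] by blast
    also have "\<dots> \<in> A" using A(3)[OF k x(2)] .
    finally show "x \<in> Cj h'" using x(1) unfolding Cj_def by simp
  qed
  have fS: "finite (Cj ` H)" using H(2) by simp
  have cardS: "card (Cj ` H) \<le> B"
  proof -
    define r where "r y = Cj (SOME h. h \<in> H \<and> q h = y)" for y
    have "Cj ` H \<subseteq> r ` (q ` H)"
    proof
      fix W assume "W \<in> Cj ` H"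
      then obtain h where h: "h \<in> H" "W = Cj h" by blast
      define h' where "h' = (SOME h'. h' \<in> H \<and> q h' = q h)"
      have h': "h' \<in> H \<and> q h' = q h" unfolding h'_def by (rule someI[of _ h]) (use h in simp)
      have "Cj h' = Cj h" using Cj_q[of h h'] Cj_q[of h' h] h h' by auto
      hence "W = r (q h)" unfolding r_def h'_def[symmetric] using h by simp
      thus "W \<in> r ` (q ` H)" using h by blast
    qed
    hence "card (Cj ` H) \<le> card (r ` (q ` H))" using H(2) by (intro card_mono) auto
    also have "\<dots> \<le> card (q ` H)" by (rule card_image_le) (use H(2) in simp)
    finally show ?thesis using qB by simp
  qed
  have Npos: "N \<ge> 1"
  proof (rule ccontr)
    assume "\<not> N \<ge> 1" hence "N = 0" by simp
    hence "card K = 0" using idx by simp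
    thus False using fK subgroup.one_closed[OF K(1)] by auto
  qed
  have "card K \<le> N ^ card (Cj ` H) * card (K \<inter> \<Inter>(Cj ` H))"
    by (rule inter_index[OF K(1) fK fS]) (use Cj_sub Cj_card Cj_def in auto)
  also have "\<dots> \<le> N ^ B * card C" unfolding C_def
    using Npos cardS by (intro mult_le_mono1 power_increasing) auto
  finally have cK_C: "card K \<le> N ^ B * card C" .
  have cH_K: "card H \<le> card (q ` H) * card K"
  proof (rule card_fibers_le[OF H(2)])
    fix z assume "z \<in> q ` H"
    then obtain h0 where h0: "h0 \<in> H" "z = q h0" by blast
    show "card {a \<in> H. q a = z} \<le> card K"
    proof (rule card_inj_on_le[where f = "\<lambda>x. inv h0 \<otimes> x"])
      show "inj_on (\<lambda>x. inv h0 \<otimes> x) {a \<in> H. q a = z}"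
        by (rule inj_onI) (use cH h0 l_cancel in auto)
      show "(\<lambda>x. inv h0 \<otimes> x) ` {a \<in> H. q a = z} \<subseteq> K"
      proof
        fix y assume "y \<in> (\<lambda>x. inv h0 \<otimes> x) ` {a \<in> H. q a = z}"
        then obtain x where x: "x \<in> H" "q x = z" "y = inv h0 \<otimes> x" by blast
        have "q h0 = q x" using x h0 by simp
        thus "y \<in> K" using q[OF h0(1) x(1)] x by simp
      qed
    qed (rule fK)
  qed
  have bound: "card H \<le> B * N ^ B * card C"
  proof -
    have "card H \<le> B * card K" using cH_K qB by (meson le_trans mult_le_mono1)
    also have "\<dots> \<le> B * (N ^ B * card C)" using cK_C by simp
    finally show ?thesis by (simp add: ac_simps)
  qed
  have Csub: "subgroup C G"
  proof -
    have "subgroup (\<Inter>(insert K (Cj ` H))) G"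
      by (rule subgroups_Inter) (use Cj_sub K(1) in auto)
    thus ?thesis unfolding C_def by simp
  qed
  have CA: "C \<subseteq> A"
  proof
    fix x assume "x \<in> C"
    hence "x \<in> Cj \<one>" unfolding C_def using subgroup.one_closed[OF H(1)] by blast
    thus "x \<in> A" unfolding Cj_def using cK by auto
  qed
  have CH: "C \<subseteq> H" unfolding C_def using K(2) by blast
  have gH: "group (G\<lparr>carrier := H\<rparr>)" by (rule subgroup.subgroup_is_group[OF H(1) is_group])
  have Cnormal: "C \<lhd> G\<lparr>carrier := H\<rparr>"
  proof (subst group.normal_inv_iff[OF gH], intro conjI ballI)
    show "subgroup C (G\<lparr>carrier := H\<rparr>)" by (rule subgroup_incl[OF Csub H(1) CH])
  next
    fix g c assume g: "g \<in> carrier (G\<lparr>carrier := H\<rparr>)" and c: "c \<in> C"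
    hence g: "g \<in> H" by simp
    have "g \<otimes> c \<otimes> inv g \<in> C"
      unfolding C_def
    proof (intro IntI InterI)
      have cK': "c \<in> K" using c unfolding C_def by blast
      show "g \<otimes> c \<otimes> inv g \<in> K" by (rule K(3)[OF g cK'])
      fix W assume "W \<in> Cj ` H"
      then obtain h where h: "h \<in> H" "W = Cj h" by blast
      define h' where "h' = inv g \<otimes> h"
      have h'H: "h' \<in> H" unfolding h'_def using g h subgroup.m_closed[OF H(1)] subgroup.m_inv_closed[OF H(1)] by blast
      have "c \<in> Cj h'" using c h'H unfolding C_def by blast
      hence "inv h' \<otimes> c \<otimes> h' \<in> A" unfolding Cj_def by simp
      moreover have "inv h' \<otimes> c \<otimes> h' = inv h \<otimes> (g \<otimes> c \<otimes> inv g) \<otimes> h"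
        unfolding h'_def using conjL4[of c "inv g" h] cH g h cK cK' by simp
      ultimately show "g \<otimes> c \<otimes> inv g \<in> W" using h \<open>g \<otimes> c \<otimes> inv g \<in> K\<close> unfolding Cj_def by simp
    qed
    thus "g \<otimes>\<^bsub>G\<lparr>carrier := H\<rparr>\<^esub> c \<otimes>\<^bsub>G\<lparr>carrier := H\<rparr>\<^esub> inv\<^bsub>G\<lparr>carrier := H\<rparr>\<^esub> g \<in> C"
      using m_inv_consistent[OF H(1) g] by simp
  qed
  show ?thesis using Cnormal Csub CA bound by blast
qed


lemma inv_mult_one_iff: "x \<in> carrier G \<Longrightarrow> y \<in> carrier G \<Longrightarrow> (inv x \<otimes> y = \<one>) = (x = y)"
proof
  assume x: "x \<in> carrier G" "y \<in> carrier G" "inv x \<otimes> y = \<one>"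
  have "y = x \<otimes> (inv x \<otimes> y)" by (rule cancel1[OF x(1,2), symmetric])
  also have "\<dots> = x" using x by simp
  finally show "x = y" by simp
qed simp

lemma subgroup_of_restrict:
  assumes "subgroup K G" "subgroup A (G\<lparr>carrier := K\<rparr>)"
  shows "subgroup A G"
proof -
  have gK: "group (G\<lparr>carrier := K\<rparr>)" by (rule subgroup.subgroup_is_group[OF assms(1) is_group])
  have "group ((G\<lparr>carrier := K\<rparr>)\<lparr>carrier := A\<rparr>)" by (rule subgroup.subgroup_is_group[OF assms(2) gK])
  hence "group (G\<lparr>carrier := A\<rparr>)" by simp
  moreover have "A \<subseteq> carrier G" using subgroup.subset[OF assms(2)] subgroup.subset[OF assms(1)] by simp
  ultimately show ?thesis using group_incl_imp_subgroup by blast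
qed

lemma card_subgroup_dvd:
  assumes "subgroup H G" "subgroup K G" "K \<subseteq> H"
  shows "card K dvd card H"
proof -
  have gH: "group (G\<lparr>carrier := H\<rparr>)" by (rule subgroup.subgroup_is_group[OF assms(1) is_group])
  have "subgroup K (G\<lparr>carrier := H\<rparr>)" by (rule subgroup_incl[OF assms(2,1,3)])
  from group.lagrange[OF gH this] have "card (rcosets\<^bsub>G\<lparr>carrier := H\<rparr>\<^esub> K) * card K = card H"
    by (simp add: order_def)
  then show ?thesis by (metis dvd_triv_right)
qed
end

lemma xfer_lemma:
  assumes G1: "group G1" and G: "group G" and G2: "group G2"
    and i: "i \<in> hom G1 G" "inj_on i (carrier G1)"
    and f: "f \<in> hom G G2" "i ` carrier G1 = kernel G G2 f"
    and B: "\<forall>H'. finite_subgroup G2 H' \<longrightarrow> card H' \<le> B"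
    and H: "finite_subgroup G H"
  shows "\<exists>K1. finite_subgroup G1 K1 \<and> card K1 dvd card H \<and>
     (\<forall>A1 N. A1 \<lhd> G1\<lparr>carrier := K1\<rparr> \<and> card K1 \<le> N * card A1 \<longrightarrow>
        subgroup A1 G1 \<and> (\<exists>C. C \<lhd> G\<lparr>carrier := H\<rparr> \<and> subgroup C G \<and> C \<subseteq> i ` A1 \<and> card H \<le> B * N ^ B * card C))"
proof -
  interpret gi: group_hom G1 G i using G1 G i(1) unfolding group_hom_def group_hom_axioms_def by simp
  interpret gf: group_hom G G2 f using G G2 f(1) unfolding group_hom_def group_hom_axioms_def by simp
  have Hs: "subgroup H G" and Hf: "finite H" using H unfolding finite_subgroup_def by auto
  have cH: "\<And>x. x \<in> H \<Longrightarrow> x \<in> carrier G" by (rule subgroup.mem_carrier[OF Hs])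
  define K where "K = H \<inter> kernel G G2 f"
  have Ks: "subgroup K G" unfolding K_def by (rule group.subgroups_Inter_pair[OF G Hs gf.subgroup_kernel])
  have KH: "K \<subseteq> H" unfolding K_def by blast
  have cK: "\<And>x. x \<in> K \<Longrightarrow> x \<in> carrier G" by (rule subgroup.mem_carrier[OF Ks])
  have Knorm: "h \<otimes>\<^bsub>G\<^esub> k \<otimes>\<^bsub>G\<^esub> inv\<^bsub>G\<^esub> h \<in> K" if "h \<in> H" "k \<in> K" for h k
  proof -
    have kH: "k \<in> H" using that(2) KH by blast
    have "h \<otimes>\<^bsub>G\<^esub> k \<in> H" by (rule subgroup.m_closed[OF Hs that(1) kH])
    moreover have "inv\<^bsub>G\<^esub> h \<in> H" by (rule subgroup.m_inv_closed[OF Hs that(1)])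
    ultimately have "h \<otimes>\<^bsub>G\<^esub> k \<otimes>\<^bsub>G\<^esub> inv\<^bsub>G\<^esub> h \<in> H" by (rule subgroup.m_closed[OF Hs])
    moreover have "h \<otimes>\<^bsub>G\<^esub> k \<otimes>\<^bsub>G\<^esub> inv\<^bsub>G\<^esub> h \<in> kernel G G2 f"
      using normal.inv_op_closed2[OF gf.normal_kernel cH[OF that(1)]] that(2) unfolding K_def by blast
    ultimately show ?thesis unfolding K_def by blast
  qed
  define K1 where "K1 = {a \<in> carrier G1. i a \<in> K}"
  have K1s: "subgroup K1 G1"
  proof (rule group.subgroupI[OF G1])
    show "K1 \<subseteq> carrier G1" unfolding K1_def by blast
    show "K1 \<noteq> {}" unfolding K1_def using subgroup.one_closed[OF Ks] by force
  next
    fix a assume "a \<in> K1" then show "inv\<^bsub>G1\<^esub> a \<in> K1"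
      unfolding K1_def using subgroup.m_inv_closed[OF Ks] by simp
  next
    fix a b assume "a \<in> K1" "b \<in> K1" then show "a \<otimes>\<^bsub>G1\<^esub> b \<in> K1"
      unfolding K1_def using subgroup.m_closed[OF Ks] by simp
  qed
  have iK1: "i ` K1 = K"
  proof
    show "i ` K1 \<subseteq> K" unfolding K1_def by blast
    show "K \<subseteq> i ` K1"
    proof
      fix k assume k: "k \<in> K"
      then have "k \<in> i ` carrier G1" using f(2) unfolding K_def by blast
      then obtain a where "a \<in> carrier G1" "k = i a" by blast
      then show "k \<in> i ` K1" using k unfolding K1_def by blast
    qed
  qed
  have injK1: "inj_on i K1" using i(2) unfolding K1_def by (rule inj_on_subset) blast
  have fK: "finite K" using Hf KH by (rule finite_subset[rotated])
  have fK1: "finite K1" using fK iK1 finite_image_iff[OF injK1] by simp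
  have cK1: "card K1 = card K" using card_image[OF injK1] iK1 by simp
  have dvd: "card K1 dvd card H" unfolding cK1 by (rule group.card_subgroup_dvd[OF G Hs Ks KH])
  have fsK1: "finite_subgroup G1 K1" unfolding finite_subgroup_def using K1s fK1 by simp
  have fH: "card (f ` H) \<le> B"
    using B gf.subgroup_img_is_subgroup[OF Hs] Hf unfolding finite_subgroup_def by simp
  have q: "f h = f h' \<longleftrightarrow> inv\<^bsub>G\<^esub> h \<otimes>\<^bsub>G\<^esub> h' \<in> K" if "h \<in> H" "h' \<in> H" for h h'
  proof -
    have c: "h \<in> carrier G" "h' \<in> carrier G" using that cH by auto
    have inH: "inv\<^bsub>G\<^esub> h \<otimes>\<^bsub>G\<^esub> h' \<in> H"
      by (rule subgroup.m_closed[OF Hs subgroup.m_inv_closed[OF Hs that(1)] that(2)])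
    have "f (inv\<^bsub>G\<^esub> h \<otimes>\<^bsub>G\<^esub> h') = inv\<^bsub>G2\<^esub> f h \<otimes>\<^bsub>G2\<^esub> f h'" using c by simp
    moreover have "(inv\<^bsub>G2\<^esub> f h \<otimes>\<^bsub>G2\<^esub> f h' = \<one>\<^bsub>G2\<^esub>) = (f h = f h')"
      by (rule group.inv_mult_one_iff[OF G2]) (use c in simp)+
    ultimately show ?thesis using inH c unfolding K_def kernel_def by auto
  qed
  have main: "\<forall>A1 N. A1 \<lhd> G1\<lparr>carrier := K1\<rparr> \<and> card K1 \<le> N * card A1 \<longrightarrow>
        subgroup A1 G1 \<and> (\<exists>C. C \<lhd> G\<lparr>carrier := H\<rparr> \<and> subgroup C G \<and> C \<subseteq> i ` A1 \<and> card H \<le> B * N ^ B * card C)"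
  proof (intro allI impI)
    fix A1 N assume A1: "A1 \<lhd> G1\<lparr>carrier := K1\<rparr> \<and> card K1 \<le> N * card A1"
    have gK1: "group (G1\<lparr>carrier := K1\<rparr>)" by (rule subgroup.subgroup_is_group[OF K1s G1])
    have A1s': "subgroup A1 (G1\<lparr>carrier := K1\<rparr>)" using A1 normal_imp_subgroup by blast
    have A1s: "subgroup A1 G1" by (rule group.subgroup_of_restrict[OF G1 K1s A1s'])
    have A1K1: "A1 \<subseteq> K1" using subgroup.subset[OF A1s'] by simp
    define A where "A = i ` A1"
    have As: "subgroup A G" unfolding A_def by (rule gi.subgroup_img_is_subgroup[OF A1s])
    have AK: "A \<subseteq> K" unfolding A_def using A1K1 iK1 by blast
    have cardA: "card A = card A1" unfolding A_def
      by (rule card_image, rule inj_on_subset[OF injK1 A1K1])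
    have idx: "card K \<le> N * card A" using A1 cK1 cardA by simp
    have Anorm: "inv\<^bsub>G\<^esub> k \<otimes>\<^bsub>G\<^esub> a \<otimes>\<^bsub>G\<^esub> k \<in> A" if ka: "k \<in> K" "a \<in> A" for k a
    proof -
      obtain k1 where k1: "k1 \<in> K1" "k = i k1" using ka(1) iK1 by blast
      obtain a1 where a1: "a1 \<in> A1" "a = i a1" using ka(2) unfolding A_def by blast
      have "inv\<^bsub>G1\<lparr>carrier := K1\<rparr>\<^esub> k1 \<otimes>\<^bsub>G1\<lparr>carrier := K1\<rparr>\<^esub> a1 \<otimes>\<^bsub>G1\<lparr>carrier := K1\<rparr>\<^esub> k1 \<in> A1"
        using normal.inv_op_closed1[of A1 "G1\<lparr>carrier := K1\<rparr>" k1 a1] A1 k1 a1 by simp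
      hence "inv\<^bsub>G1\<^esub> k1 \<otimes>\<^bsub>G1\<^esub> a1 \<otimes>\<^bsub>G1\<^esub> k1 \<in> A1"
        using group.m_inv_consistent[OF G1 K1s k1(1)] by simp
      hence "i (inv\<^bsub>G1\<^esub> k1 \<otimes>\<^bsub>G1\<^esub> a1 \<otimes>\<^bsub>G1\<^esub> k1) \<in> A" unfolding A_def by blast
      moreover have "k1 \<in> carrier G1" "a1 \<in> carrier G1" using k1 a1 A1K1 K1_def by auto
      ultimately show ?thesis using k1 a1 by simp
    qed
    obtain C where C: "C \<lhd> G\<lparr>carrier := H\<rparr>" "subgroup C G" "C \<subseteq> A" "card H \<le> B * N ^ B * card C"
      using group.core[OF G Hs Hf Ks KH Knorm As AK Anorm idx q fH] by blast
    show "subgroup A1 G1 \<and> (\<exists>C. C \<lhd> G\<lparr>carrier := H\<rparr> \<and> subgroup C G \<and> C \<subseteq> i ` A1 \<and> card H \<le> B * N ^ B * card C)"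
      using A1s C A_def by blast
  qed
  show ?thesis using fsK1 dvd main by blast
qed


lemma gen_jordan:
  assumes G1: "group G1" and G: "group G" and G2: "group G2"
    and i: "i \<in> hom G1 G" "inj_on i (carrier G1)"
    and f: "f \<in> hom G G2" "i ` carrier G1 = kernel G G2 f"
    and B: "\<forall>H'. finite_subgroup G2 H' \<longrightarrow> card H' \<le> B"
    and PT: "\<And>A1. subgroup A1 G1 \<Longrightarrow> P1 A1 \<Longrightarrow> P (i ` A1)"
    and PD: "\<And>A C. subgroup C G \<Longrightarrow> subgroup A G \<Longrightarrow> C \<subseteq> A \<Longrightarrow> P A \<Longrightarrow> P C"
    and p: "Factorial_Ring.prime (p::nat)"
  shows "(jordan_wrt G1 P1 \<longrightarrow> jordan_wrt G P)
    \<and> (gen_p_jordan_wrt G1 p P1 \<longrightarrow> gen_p_jordan_wrt G p P)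
    \<and> (p_jordan_wrt G1 p P1 \<longrightarrow> p_jordan_wrt G p P)"
proof (intro conjI impI)
  note tr = xfer_lemma[OF G1 G G2 i f B]
  have subimg: "subgroup (i ` A1) G" if "subgroup A1 G1" for A1
  proof -
    interpret gi: group_hom G1 G i using G1 G i(1) unfolding group_hom_def group_hom_axioms_def by simp
    show ?thesis by (rule gi.subgroup_img_is_subgroup[OF that])
  qed
  {
    assume "jordan_wrt G1 P1"
    then obtain J where J: "\<And>K. finite_subgroup G1 K \<Longrightarrow>
      (\<exists>A. A \<lhd> (G1\<lparr>carrier := K\<rparr>) \<and> card K \<le> J * card A \<and> P1 A)"
      unfolding jordan_wrt_def by blast
    show "jordan_wrt G P" unfolding jordan_wrt_def
    proof (rule exI[of _ "B * J ^ B"], intro allI impI)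
      fix H assume H: "finite_subgroup G H"
      obtain K1 where K1: "finite_subgroup G1 K1" "card K1 dvd card H"
        "\<forall>A1 N. A1 \<lhd> G1\<lparr>carrier := K1\<rparr> \<and> card K1 \<le> N * card A1 \<longrightarrow>
        subgroup A1 G1 \<and> (\<exists>C. C \<lhd> G\<lparr>carrier := H\<rparr> \<and> subgroup C G \<and> C \<subseteq> i ` A1 \<and> card H \<le> B * N ^ B * card C)"
        using tr[OF H] by blast
      obtain A1 where A1: "A1 \<lhd> G1\<lparr>carrier := K1\<rparr>" "card K1 \<le> J * card A1" "P1 A1" using J[OF K1(1)] by blast
      obtain C where C: "subgroup A1 G1" "C \<lhd> G\<lparr>carrier := H\<rparr>" "subgroup C G" "C \<subseteq> i ` A1" "card H \<le> B * J ^ B * card C"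
        using K1(3)[rule_format, of A1 J] A1 by blast
      have "P C" using PD[OF C(3) subimg[OF C(1)] C(4) PT[OF C(1) A1(3)]] .
      then show "\<exists>A. A \<lhd> G\<lparr>carrier := H\<rparr> \<and> card H \<le> B * J ^ B * card A \<and> P A" using C by blast
    qed
  }
  {
    assume "gen_p_jordan_wrt G1 p P1"
    then obtain J where J: "\<And>K. finite_subgroup G1 K \<and> \<not> p dvd card K \<Longrightarrow>
      (\<exists>A. A \<lhd> (G1\<lparr>carrier := K\<rparr>) \<and> card K \<le> J * card A \<and> P1 A)"
      unfolding gen_p_jordan_wrt_def by blast
    show "gen_p_jordan_wrt G p P" unfolding gen_p_jordan_wrt_def
    proof (rule exI[of _ "B * J ^ B"], intro allI impI)
      fix H assume H: "finite_subgroup G H \<and> \<not> p dvd card H"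
      obtain K1 where K1: "finite_subgroup G1 K1" "card K1 dvd card H"
        "\<forall>A1 N. A1 \<lhd> G1\<lparr>carrier := K1\<rparr> \<and> card K1 \<le> N * card A1 \<longrightarrow>
        subgroup A1 G1 \<and> (\<exists>C. C \<lhd> G\<lparr>carrier := H\<rparr> \<and> subgroup C G \<and> C \<subseteq> i ` A1 \<and> card H \<le> B * N ^ B * card C)"
        using tr H by blast
      have "\<not> p dvd card K1" using H K1(2) dvd_trans by blast
      then obtain A1 where A1: "A1 \<lhd> G1\<lparr>carrier := K1\<rparr>" "card K1 \<le> J * card A1" "P1 A1" using J K1(1) by blast
      obtain C where C: "subgroup A1 G1" "C \<lhd> G\<lparr>carrier := H\<rparr>" "subgroup C G" "C \<subseteq> i ` A1" "card H \<le> B * J ^ B * card C"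
        using K1(3)[rule_format, of A1 J] A1 by blast
      have "P C" using PD[OF C(3) subimg[OF C(1)] C(4) PT[OF C(1) A1(3)]] .
      then show "\<exists>A. A \<lhd> G\<lparr>carrier := H\<rparr> \<and> card H \<le> B * J ^ B * card A \<and> P A" using C by blast
    qed
  }
  {
    assume "p_jordan_wrt G1 p P1"
    then obtain J e where J: "\<And>K. finite_subgroup G1 K \<Longrightarrow>
      (\<exists>A. A \<lhd> (G1\<lparr>carrier := K\<rparr>) \<and> coprime (card A) p \<and>
          card K \<le> J * (p ^ multiplicity p (card K)) ^ e * card A \<and> P1 A)"
      unfolding p_jordan_wrt_def by blast
    show "p_jordan_wrt G p P" unfolding p_jordan_wrt_def
    proof (rule exI[of _ "B * J ^ B"], rule exI[of _ "e * B"], intro allI impI)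
      fix H assume H: "finite_subgroup G H"
      define N where "N = J * (p ^ multiplicity p (card H)) ^ e"
      obtain K1 where K1: "finite_subgroup G1 K1" "card K1 dvd card H"
        "\<forall>A1 N. A1 \<lhd> G1\<lparr>carrier := K1\<rparr> \<and> card K1 \<le> N * card A1 \<longrightarrow>
        subgroup A1 G1 \<and> (\<exists>C. C \<lhd> G\<lparr>carrier := H\<rparr> \<and> subgroup C G \<and> C \<subseteq> i ` A1 \<and> card H \<le> B * N ^ B * card C)"
        using tr[OF H] by blast
      obtain A1 where A1: "A1 \<lhd> G1\<lparr>carrier := K1\<rparr>" "coprime (card A1) p"
          "card K1 \<le> J * (p ^ multiplicity p (card K1)) ^ e * card A1" "P1 A1"
        using J[OF K1(1)] by blast
      have Hne: "card H \<noteq> 0" using H unfolding finite_subgroup_def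
        using subgroup.one_closed card_gt_0_iff by fastforce
      have nu: "\<not> is_unit p" using p not_prime_unit by blast
      have "p ^ multiplicity p (card K1) dvd card H"
        using multiplicity_dvd K1(2) dvd_trans by blast
      hence mle: "multiplicity p (card K1) \<le> multiplicity p (card H)"
        using power_dvd_iff_le_multiplicity[OF Hne nu] by blast
      have pp: "p > 0" using p prime_gt_0_nat by blast
      have "p ^ multiplicity p (card K1) \<le> p ^ multiplicity p (card H)"
        using mle pp by (simp add: power_increasing)
      hence "J * (p ^ multiplicity p (card K1)) ^ e \<le> N" unfolding N_def
        by (simp add: power_mono)
      hence "card K1 \<le> N * card A1" using A1(3) by (meson le_trans mult_le_mono1)
      then obtain C where C: "subgroup A1 G1" "C \<lhd> G\<lparr>carrier := H\<rparr>" "subgroup C G" "C \<subseteq> i ` A1" "card H \<le> B * N ^ B * card C"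
        using K1(3)[rule_format, of A1 N] A1(1) by blast
      have "P C" using PD[OF C(3) subimg[OF C(1)] C(4) PT[OF C(1) A1(4)]] .
      moreover have "coprime (card C) p"
      proof -
        have injA1: "inj_on i A1"
          using i(2) subgroup.subset[OF C(1)] by (rule inj_on_subset)
        have "card C dvd card (i ` A1)" by (rule group.card_subgroup_dvd[OF G subimg[OF C(1)] C(3,4)])
        hence "card C dvd card A1" using card_image[OF injA1] by simp
        thus ?thesis using A1(2) coprime_divisors dvd_refl by blast
      qed
      moreover have "card H \<le> B * J ^ B * (p ^ multiplicity p (card H)) ^ (e * B) * card C"
      proof -
        have "(p ^ multiplicity p (card H)) ^ (e * B) = ((p ^ multiplicity p (card H)) ^ e) ^ B"
          by (rule power_mult)
        moreover have "N ^ B = J ^ B * ((p ^ multiplicity p (card H)) ^ e) ^ B"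
          unfolding N_def by (rule power_mult_distrib)
        ultimately show ?thesis using C(5) by (simp add: ac_simps)
      qed
      ultimately show "\<exists>A. A \<lhd> G\<lparr>carrier := H\<rparr> \<and> coprime (card A) p \<and>
          card H \<le> B * J ^ B * (p ^ multiplicity p (card H)) ^ (e * B) * card A \<and> P A"
        using C by blast
    qed
  }
qed


lemma lc_carrier:
  assumes "group G" "A \<subseteq> carrier G"
  shows "lower_central G A k \<subseteq> carrier G"
proof (induction k)
  case 0 then show ?case using assms(2) by simp
next
  case (Suc k)
  have "{x \<otimes>\<^bsub>G\<^esub> y \<otimes>\<^bsub>G\<^esub> inv\<^bsub>G\<^esub> x \<otimes>\<^bsub>G\<^esub> inv\<^bsub>G\<^esub> y | x y. x \<in> lower_central G A k \<and> y \<in> A} \<subseteq> carrier G"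
    using Suc assms by (auto intro!: group.subgroupE monoid.m_closed group.is_monoid group.inv_closed)
  then show ?case by (simp add: group.generate_incl[OF assms(1)])
qed

lemma lc_mono:
  assumes "group G" "C \<subseteq> A"
  shows "lower_central G C k \<subseteq> lower_central G A k"
proof (induction k)
  case 0 then show ?case using assms(2) by simp
next
  case (Suc k)
  have "{x \<otimes>\<^bsub>G\<^esub> y \<otimes>\<^bsub>G\<^esub> inv\<^bsub>G\<^esub> x \<otimes>\<^bsub>G\<^esub> inv\<^bsub>G\<^esub> y | x y. x \<in> lower_central G C k \<and> y \<in> C}
     \<subseteq> {x \<otimes>\<^bsub>G\<^esub> y \<otimes>\<^bsub>G\<^esub> inv\<^bsub>G\<^esub> x \<otimes>\<^bsub>G\<^esub> inv\<^bsub>G\<^esub> y | x y. x \<in> lower_central G A k \<and> y \<in> A}"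
    using Suc assms(2) by blast
  then show ?case by (simp add: group.mono_generate[OF assms(1)])
qed

lemma lc_one:
  assumes "subgroup C G"
  shows "\<one>\<^bsub>G\<^esub> \<in> lower_central G C k"
proof (cases k)
  case 0 then show ?thesis using subgroup.one_closed[OF assms] by simp
next
  case (Suc m) then show ?thesis by (simp add: generate.one)
qed

lemma lc_img:
  assumes G1: "group G1" and G: "group G" and i: "i \<in> hom G1 G" and A: "A1 \<subseteq> carrier G1"
  shows "i ` lower_central G1 A1 k = lower_central G (i ` A1) k"
proof (induction k)
  case 0 then show ?case by simp
next
  case (Suc k)
  interpret gi: group_hom G1 G i using G1 G i unfolding group_hom_def group_hom_axioms_def by simp
  let ?L = "lower_central G1 A1 k"
  have L: "?L \<subseteq> carrier G1" by (rule lc_carrier[OF G1 A])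
  let ?S = "{x \<otimes>\<^bsub>G1\<^esub> y \<otimes>\<^bsub>G1\<^esub> inv\<^bsub>G1\<^esub> x \<otimes>\<^bsub>G1\<^esub> inv\<^bsub>G1\<^esub> y | x y. x \<in> ?L \<and> y \<in> A1}"
  have S: "?S \<subseteq> carrier G1" using L A by (auto intro!: gi.G.m_closed gi.G.inv_closed)
  have img: "i ` ?S = {x \<otimes>\<^bsub>G\<^esub> y \<otimes>\<^bsub>G\<^esub> inv\<^bsub>G\<^esub> x \<otimes>\<^bsub>G\<^esub> inv\<^bsub>G\<^esub> y | x y. x \<in> i ` ?L \<and> y \<in> i ` A1}"
  proof
    show "i ` ?S \<subseteq> {x \<otimes>\<^bsub>G\<^esub> y \<otimes>\<^bsub>G\<^esub> inv\<^bsub>G\<^esub> x \<otimes>\<^bsub>G\<^esub> inv\<^bsub>G\<^esub> y | x y. x \<in> i ` ?L \<and> y \<in> i ` A1}"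
    proof
      fix z assume "z \<in> i ` ?S"
      then obtain x y where xy: "x \<in> ?L" "y \<in> A1" "z = i (x \<otimes>\<^bsub>G1\<^esub> y \<otimes>\<^bsub>G1\<^esub> inv\<^bsub>G1\<^esub> x \<otimes>\<^bsub>G1\<^esub> inv\<^bsub>G1\<^esub> y)" by blast
      have c: "x \<in> carrier G1" "y \<in> carrier G1" using xy L A by auto
      have "z = i x \<otimes>\<^bsub>G\<^esub> i y \<otimes>\<^bsub>G\<^esub> inv\<^bsub>G\<^esub> i x \<otimes>\<^bsub>G\<^esub> inv\<^bsub>G\<^esub> i y" using xy(3) c by simp
      then show "z \<in> {x \<otimes>\<^bsub>G\<^esub> y \<otimes>\<^bsub>G\<^esub> inv\<^bsub>G\<^esub> x \<otimes>\<^bsub>G\<^esub> inv\<^bsub>G\<^esub> y | x y. x \<in> i ` ?L \<and> y \<in> i ` A1}"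
        using xy(1,2) by blast
    qed
    show "{x \<otimes>\<^bsub>G\<^esub> y \<otimes>\<^bsub>G\<^esub> inv\<^bsub>G\<^esub> x \<otimes>\<^bsub>G\<^esub> inv\<^bsub>G\<^esub> y | x y. x \<in> i ` ?L \<and> y \<in> i ` A1} \<subseteq> i ` ?S"
    proof
      fix z assume "z \<in> {x \<otimes>\<^bsub>G\<^esub> y \<otimes>\<^bsub>G\<^esub> inv\<^bsub>G\<^esub> x \<otimes>\<^bsub>G\<^esub> inv\<^bsub>G\<^esub> y | x y. x \<in> i ` ?L \<and> y \<in> i ` A1}"
      then obtain x y where xy: "x \<in> ?L" "y \<in> A1" "z = i x \<otimes>\<^bsub>G\<^esub> i y \<otimes>\<^bsub>G\<^esub> inv\<^bsub>G\<^esub> i x \<otimes>\<^bsub>G\<^esub> inv\<^bsub>G\<^esub> i y" by blast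
      have c: "x \<in> carrier G1" "y \<in> carrier G1" using xy L A by auto
      have "z = i (x \<otimes>\<^bsub>G1\<^esub> y \<otimes>\<^bsub>G1\<^esub> inv\<^bsub>G1\<^esub> x \<otimes>\<^bsub>G1\<^esub> inv\<^bsub>G1\<^esub> y)" using xy(3) c by simp
      then show "z \<in> i ` ?S" using xy(1,2) by blast
    qed
  qed
  have "i ` lower_central G1 A1 (Suc k) = i ` generate G1 ?S" by simp
  also have "\<dots> = generate G (i ` ?S)" by (rule gi.generate_img[OF S, symmetric])
  also have "\<dots> = lower_central G (i ` A1) (Suc k)" unfolding img Suc by simp
  finally show ?case .
qed

theorem lemma2p8:
  fixes G1 :: "('a, 'm) monoid_scheme" and G :: "('b, 'n) monoid_scheme"
    and G2 :: "('c, 'o) monoid_scheme"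
    and i :: "'a \<Rightarrow> 'b" and f :: "'b \<Rightarrow> 'c" and p c :: nat
  assumes "Factorial_Ring.prime p"
    and "group G1" and "group G" and "group G2"
    and "i \<in> hom G1 G" and "inj_on i (carrier G1)"
    and "f \<in> hom G G2" and "i ` carrier G1 = kernel G G2 f"
    and "bounded_finite_subgroups G2"
  shows "(Jordan G1 \<longrightarrow> Jordan G)
    \<and> (p_Jordan G1 p \<longrightarrow> p_Jordan G p)
    \<and> (gen_p_Jordan G1 p \<longrightarrow> gen_p_Jordan G p)
    \<and> (nil_Jordan G1 c \<longrightarrow> nil_Jordan G c)
    \<and> (nil_p_Jordan G1 p c \<longrightarrow> nil_p_Jordan G p c)
    \<and> (gen_nil_p_Jordan G1 p c \<longrightarrow> gen_nil_p_Jordan G p c)"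
proof -
  note G1 = assms(2) and G = assms(3) and G2 = assms(4) and i = assms(5,6) and f = assms(7,8)
  obtain B where B: "\<forall>H'. finite_subgroup G2 H' \<longrightarrow> card H' \<le> B"
    using assms(9) unfolding bounded_finite_subgroups_def by blast
  have ab: "(jordan_wrt G1 (abelian_set G1) \<longrightarrow> jordan_wrt G (abelian_set G))
    \<and> (gen_p_jordan_wrt G1 p (abelian_set G1) \<longrightarrow> gen_p_jordan_wrt G p (abelian_set G))
    \<and> (p_jordan_wrt G1 p (abelian_set G1) \<longrightarrow> p_jordan_wrt G p (abelian_set G))"
  proof (rule gen_jordan[OF G1 G G2 i f B _ _ assms(1)])
    fix A1 assume A1: "subgroup A1 G1" "abelian_set G1 A1"
    show "abelian_set G (i ` A1)" unfolding abelian_set_def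
    proof (intro ballI)
      fix x y assume "x \<in> i ` A1" "y \<in> i ` A1"
      then obtain a b where ab: "a \<in> A1" "b \<in> A1" "x = i a" "y = i b" by blast
      have c: "a \<in> carrier G1" "b \<in> carrier G1" using ab subgroup.mem_carrier[OF A1(1)] by auto
      have "a \<otimes>\<^bsub>G1\<^esub> b = b \<otimes>\<^bsub>G1\<^esub> a" using A1(2) ab unfolding abelian_set_def by blast
      then show "x \<otimes>\<^bsub>G\<^esub> y = y \<otimes>\<^bsub>G\<^esub> x" using ab c hom_mult[OF i(1)] by metis
    qed
  next
    fix A C assume "C \<subseteq> A" "abelian_set G A"
    then show "abelian_set G C" unfolding abelian_set_def by blast
  qed
  have nil: "(jordan_wrt G1 (nilpotent_class_le G1 c) \<longrightarrow> jordan_wrt G (nilpotent_class_le G c))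
    \<and> (gen_p_jordan_wrt G1 p (nilpotent_class_le G1 c) \<longrightarrow> gen_p_jordan_wrt G p (nilpotent_class_le G c))
    \<and> (p_jordan_wrt G1 p (nilpotent_class_le G1 c) \<longrightarrow> p_jordan_wrt G p (nilpotent_class_le G c))"
  proof (rule gen_jordan[OF G1 G G2 i f B _ _ assms(1)])
    fix A1 assume A1: "subgroup A1 G1" "nilpotent_class_le G1 c A1"
    have "lower_central G (i ` A1) c = i ` lower_central G1 A1 c"
      by (rule lc_img[OF G1 G i(1) subgroup.subset[OF A1(1)], symmetric])
    also have "\<dots> = {\<one>\<^bsub>G\<^esub>}" using A1(2) hom_one[OF i(1) G1 G] unfolding nilpotent_class_le_def by simp
    finally show "nilpotent_class_le G c (i ` A1)" unfolding nilpotent_class_le_def .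
  next
    fix A C assume h: "subgroup C G" "C \<subseteq> A" "nilpotent_class_le G c A"
    have "lower_central G C c \<subseteq> {\<one>\<^bsub>G\<^esub>}" using lc_mono[OF G h(2), of c] h(3) unfolding nilpotent_class_le_def by simp
    moreover have "\<one>\<^bsub>G\<^esub> \<in> lower_central G C c" by (rule lc_one[OF h(1)])
    ultimately show "nilpotent_class_le G c C" unfolding nilpotent_class_le_def by blast
  qed
  show ?thesis using ab nil unfolding Jordan_def p_Jordan_def gen_p_Jordan_def nil_Jordan_def
      nil_p_Jordan_def gen_nil_p_Jordan_def by blast
qed

end
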